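(* Let $P,Q$ be finite posets and $R$ an indecomposable commutative unital ring. Then every $R$-linear algebra isomorphism $\Phi:I^3(P,R)\to I^3(Q,R)$ is of the form $\widehat\varphi$ for some poset isomorphism $\varphi:P\to Q$, where $\widehat\varphi$ is the $R$-linear map determined by $\widehat\varphi(e_{xyz})=e_{\varphi(x)\varphi(y)\varphi(z)}$ for all $x\le y\le z$ in $P$.
   Context: A commutative ring $R$ is indecomposable if its only idempotents are $0$ and $1$. For a finite poset $P$, let $P^3_\le=\{(x,y,z)\in P^3: x\le y\le z\}$. The third partial flag incidence algebra $I^3(P,R)$ is the $R$-module of all functions $f:P^3_\le\to R$ (pointwise operations) with the (non-associative) multiplication $(fg)(x_1,x_2,x_3)=\sum f(x_1,y_1,y_2)\,g(y_1,y_2,x_3)$, the sum over all $y_1,y_2$ with $x_1\le y_1\le x_2\le y_2\le x_3$. For $x\le y\le z$ in $P$, $e_{xyz}\in I^3(P,R)$ is the function taking value $1$ at $(x,y,z)$ and $0$ elsewhere; these form a basis of $I^3(P,R)$. *)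

theory Defs
  imports Main
begin

text \<open>The third partial flag incidence algebra I^3(P,R): functions on P^3 that
vanish outside the chains x <= y <= z (so they are exactly functions on P^3_<=).\<close>

definition I3 :: "('a::order \<times> 'a \<times> 'a \<Rightarrow> 'r::zero) set" where
  "I3 = {f. \<forall>x y z. \<not> (x \<le> y \<and> y \<le> z) \<longrightarrow> f (x, y, z) = 0}"

definition I3_mult ::
  "('a::{finite,order} \<times> 'a \<times> 'a \<Rightarrow> 'r::comm_ring_1)
   \<Rightarrow> ('a \<times> 'a \<times> 'a \<Rightarrow> 'r) \<Rightarrow> ('a \<times> 'a \<times> 'a \<Rightarrow> 'r)" where
  "I3_mult f g = (\<lambda>(x1, x2, x3).
     if x1 \<le> x2 \<and> x2 \<le> x3 then
       (\<Sum>(y1, y2) \<in> {(y1, y2). x1 \<le> y1 \<and> y1 \<le> x2 \<and> x2 \<le> y2 \<and> y2 \<le> x3}.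
          f (x1, y1, y2) * g (y1, y2, x3))
     else 0)"

definition I3_e :: "'a \<Rightarrow> 'a \<Rightarrow> 'a \<Rightarrow> ('a \<times> 'a \<times> 'a \<Rightarrow> 'r::{zero,one})" where
  "I3_e x y z = (\<lambda>t. if t = (x, y, z) then 1 else 0)"

definition indecomposable_ring :: "'r::comm_ring_1 itself \<Rightarrow> bool" where
  "indecomposable_ring _ \<longleftrightarrow> ((0::'r) \<noteq> 1 \<and> (\<forall>e::'r. e * e = e \<longrightarrow> e = 0 \<or> e = 1))"

definition poset_iso :: "('a::order \<Rightarrow> 'b::order) \<Rightarrow> bool" where
  "poset_iso \<phi> \<longleftrightarrow> bij \<phi> \<and> (\<forall>x y. x \<le> y \<longleftrightarrow> \<phi> x \<le> \<phi> y)"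

end

theory Submission
  imports Defs
begin

lemma I3_e_in: "x \<le> y \<Longrightarrow> y \<le> z \<Longrightarrow> I3_e x y z \<in> I3"
  by (auto simp: I3_def I3_e_def)

lemma I3_mult_in: "I3_mult f g \<in> I3"
  by (auto simp: I3_def I3_mult_def)

lemma I3_mult_diag: "I3_mult f g (q,q,q) = f (q,q,q) * g (q,q,q)"
proof -
  have "{(y1, y2). q \<le> y1 \<and> y1 \<le> q \<and> q \<le> y2 \<and> y2 \<le> q} = {(q,q)}"
    by (auto intro: order.antisym)
  then show ?thesis by (simp add: I3_mult_def)
qed

lemma sum_single:
  assumes "finite S" "\<And>s. s \<in> S \<Longrightarrow> s \<noteq> a \<Longrightarrow> f s = 0"
  shows "sum f S = (if a \<in> S then f a else 0)"
proof -
  have "sum f S = (\<Sum>s\<in>S. if s = a then f a else 0)"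
    using assms(2) by (intro sum.cong) auto
  also have "\<dots> = (if a \<in> S then f a else 0)" using assms(1) by (simp add: sum.delta)
  finally show ?thesis .
qed

lemma I3_mult_e_left:
  fixes g :: "'a::{finite,order} \<times> 'a \<times> 'a \<Rightarrow> 'r::comm_ring_1"
  assumes g: "g \<in> I3"
  shows "I3_mult (I3_e a b c) g (x1,x2,x3) =
     (if x1 = a \<and> a \<le> b \<and> b \<le> x2 \<and> x2 \<le> c then g (b,c,x3) else 0)"
proof -
  have gz: "\<not> (u \<le> v \<and> v \<le> w) \<Longrightarrow> g (u,v,w) = 0" for u v w using g by (auto simp: I3_def)
  have s: "(\<Sum>(y1, y2) \<in> {(y1, y2). x1 \<le> y1 \<and> y1 \<le> x2 \<and> x2 \<le> y2 \<and> y2 \<le> x3}.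
          I3_e a b c (x1, y1, y2) * g (y1, y2, x3)) =
        (if (b,c) \<in> {(y1, y2). x1 \<le> y1 \<and> y1 \<le> x2 \<and> x2 \<le> y2 \<and> y2 \<le> x3} then
          I3_e a b c (x1, b, c) * g (b, c, x3) else 0)"
    by (subst sum_single[where a="(b,c)"]) (auto simp: I3_e_def split: if_splits)
  have gz2: "g (b,c,x3) \<noteq> 0 \<Longrightarrow> c \<le> x3" using gz by blast
  have "I3_mult (I3_e a b c) g (x1,x2,x3) = (if x1 \<le> x2 \<and> x2 \<le> x3 then
       (\<Sum>(y1, y2) \<in> {(y1, y2). x1 \<le> y1 \<and> y1 \<le> x2 \<and> x2 \<le> y2 \<and> y2 \<le> x3}.
          I3_e a b c (x1, y1, y2) * g (y1, y2, x3)) else 0)"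
    by (simp only: I3_mult_def prod.case)
  also have "\<dots> = (if x1 \<le> x2 \<and> x2 \<le> x3 then
        (if (b,c) \<in> {(y1, y2). x1 \<le> y1 \<and> y1 \<le> x2 \<and> x2 \<le> y2 \<and> y2 \<le> x3} then
          I3_e a b c (x1, b, c) * g (b, c, x3) else 0) else 0)"
    by (simp only: s)
  also have "\<dots> = (if x1 = a \<and> a \<le> b \<and> b \<le> x2 \<and> x2 \<le> c then g (b,c,x3) else 0)"
  proof (cases "x1 = a \<and> a \<le> b \<and> b \<le> x2 \<and> x2 \<le> c \<and> c \<le> x3")
    case True
    then show ?thesis by (auto simp: I3_e_def intro: order_trans)
  next
    case False
    then show ?thesis using gz2 by (auto simp: I3_e_def)
  qed
  finally show ?thesis .
qed

lemma I3_zero: "f \<in> I3 \<Longrightarrow> \<not> (x \<le> y \<and> y \<le> z) \<Longrightarrow> f (x,y,z) = 0"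
  by (auto simp: I3_def)

lemma I3_mult_e_right:
  fixes f :: "'a::{finite,order} \<times> 'a \<times> 'a \<Rightarrow> 'r::comm_ring_1"
  assumes f: "f \<in> I3"
  shows "I3_mult f (I3_e a b c) (x1,x2,x3) =
     (if x3 = c \<and> a \<le> x2 \<and> x2 \<le> b \<and> b \<le> c then f (x1,a,b) else 0)"
proof -
  have s: "(\<Sum>(y1, y2) \<in> {(y1, y2). x1 \<le> y1 \<and> y1 \<le> x2 \<and> x2 \<le> y2 \<and> y2 \<le> x3}.
          f (x1, y1, y2) * I3_e a b c (y1, y2, x3)) =
        (if (a,b) \<in> {(y1, y2). x1 \<le> y1 \<and> y1 \<le> x2 \<and> x2 \<le> y2 \<and> y2 \<le> x3} then
          f (x1, a, b) * I3_e a b c (a, b, x3) else 0)"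
    by (subst sum_single[where a="(a,b)"]) (auto simp: I3_e_def split: if_splits)
  have fz: "f (x1,a,b) \<noteq> 0 \<Longrightarrow> x1 \<le> a" using I3_zero[OF f] by blast
  have "I3_mult f (I3_e a b c) (x1,x2,x3) = (if x1 \<le> x2 \<and> x2 \<le> x3 then
       (\<Sum>(y1, y2) \<in> {(y1, y2). x1 \<le> y1 \<and> y1 \<le> x2 \<and> x2 \<le> y2 \<and> y2 \<le> x3}.
          f (x1, y1, y2) * I3_e a b c (y1, y2, x3)) else 0)"
    by (simp only: I3_mult_def prod.case)
  also have "\<dots> = (if x1 \<le> x2 \<and> x2 \<le> x3 then
        (if (a,b) \<in> {(y1, y2). x1 \<le> y1 \<and> y1 \<le> x2 \<and> x2 \<le> y2 \<and> y2 \<le> x3} then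
          f (x1, a, b) * I3_e a b c (a, b, x3) else 0) else 0)"
    by (simp only: s)
  also have "\<dots> = (if x3 = c \<and> a \<le> x2 \<and> x2 \<le> b \<and> b \<le> c then f (x1,a,b) else 0)"
  proof (cases "x3 = c \<and> x1 \<le> a \<and> a \<le> x2 \<and> x2 \<le> b \<and> b \<le> c")
    case True
    then show ?thesis by (auto simp: I3_e_def intro: order_trans)
  next
    case False
    then show ?thesis using fz by (auto simp: I3_e_def)
  qed
  finally show ?thesis .
qed

lemma I3_mult_F1:
  fixes F H :: "'a::{finite,order} \<times> 'a \<times> 'a \<Rightarrow> 'r::comm_ring_1"
  assumes F: "F \<in> I3" and H: "H \<in> I3"
  shows "I3_mult F (I3_mult (I3_e p q q) H) (x1,q,q) = F (x1,p,q) * H (q,q,q)"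
proof -
  let ?G = "I3_mult (I3_e p q q) H"
  have G: "?G (y1,y2,y3) = (if y1 = p \<and> p \<le> q \<and> q \<le> y2 \<and> y2 \<le> q then H (q,q,y3) else 0)"
    for y1 y2 y3 by (rule I3_mult_e_left[OF H])
  have s: "(\<Sum>(y1, y2) \<in> {(y1, y2). x1 \<le> y1 \<and> y1 \<le> q \<and> q \<le> y2 \<and> y2 \<le> q}.
          F (x1, y1, y2) * ?G (y1, y2, q)) =
        (if (p,q) \<in> {(y1, y2). x1 \<le> y1 \<and> y1 \<le> q \<and> q \<le> y2 \<and> y2 \<le> q} then
          F (x1, p, q) * ?G (p, q, q) else 0)"
    by (subst sum_single[where a="(p,q)"]) (auto simp: G intro: order.antisym split: if_splits)
  have "I3_mult F ?G (x1,q,q) = (if x1 \<le> q \<and> q \<le> q then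
       (\<Sum>(y1, y2) \<in> {(y1, y2). x1 \<le> y1 \<and> y1 \<le> q \<and> q \<le> y2 \<and> y2 \<le> q}.
          F (x1, y1, y2) * ?G (y1, y2, q)) else 0)"
    by (simp only: I3_mult_def prod.case)
  also have "\<dots> = F (x1,p,q) * H (q,q,q)"
  proof (cases "x1 \<le> p \<and> p \<le> q")
    case True
    then show ?thesis using s by (auto simp: G intro: order_trans)
  next
    case False
    then show ?thesis using s I3_zero[OF F False] by (auto simp: G)
  qed
  finally show ?thesis .
qed

lemma I3_mult_F2:
  fixes F H :: "'a::{finite,order} \<times> 'a \<times> 'a \<Rightarrow> 'r::comm_ring_1"
  assumes F: "F \<in> I3" and H: "H \<in> I3"
  shows "I3_mult (I3_mult H (I3_e p p q)) F (p,p,z) = H (p,p,p) * F (p,q,z)"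
proof -
  let ?G = "I3_mult H (I3_e p p q)"
  have G: "?G (y1,y2,y3) = (if y3 = q \<and> p \<le> y2 \<and> y2 \<le> p \<and> p \<le> q then H (y1,p,p) else 0)"
    for y1 y2 y3 by (rule I3_mult_e_right[OF H])
  have s: "(\<Sum>(y1, y2) \<in> {(y1, y2). p \<le> y1 \<and> y1 \<le> p \<and> p \<le> y2 \<and> y2 \<le> z}.
          ?G (p, y1, y2) * F (y1, y2, z)) =
        (if (p,q) \<in> {(y1, y2). p \<le> y1 \<and> y1 \<le> p \<and> p \<le> y2 \<and> y2 \<le> z} then
          ?G (p, p, q) * F (p, q, z) else 0)"
    by (subst sum_single[where a="(p,q)"]) (auto simp: G intro: order.antisym split: if_splits)
  have "I3_mult ?G F (p,p,z) = (if p \<le> p \<and> p \<le> z then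
       (\<Sum>(y1, y2) \<in> {(y1, y2). p \<le> y1 \<and> y1 \<le> p \<and> p \<le> y2 \<and> y2 \<le> z}.
          ?G (p, y1, y2) * F (y1, y2, z)) else 0)"
    by (simp only: I3_mult_def prod.case)
  also have "\<dots> = H (p,p,p) * F (p,q,z)"
  proof (cases "p \<le> q \<and> q \<le> z")
    case True
    then show ?thesis using s by (auto simp: G intro: order_trans)
  next
    case False
    then show ?thesis using s I3_zero[OF F False] by (auto simp: G)
  qed
  finally show ?thesis .
qed

lemma I3_add_in: "(f::_\<Rightarrow>'r::comm_ring_1) \<in> I3 \<Longrightarrow> g \<in> I3 \<Longrightarrow> (\<lambda>t. f t + g t) \<in> I3"
  by (auto simp: I3_def)
lemma I3_smult_in: "(f::_\<Rightarrow>'r::comm_ring_1) \<in> I3 \<Longrightarrow> (\<lambda>t. r * f t) \<in> I3"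
  by (auto simp: I3_def)
lemma I3_0_in: "(\<lambda>t. 0) \<in> I3"
  by (auto simp: I3_def)
lemma I3_sum_in: "(\<And>s. s \<in> S \<Longrightarrow> (g s::_\<Rightarrow>'r::comm_ring_1) \<in> I3) \<Longrightarrow> (\<lambda>t. \<Sum>s\<in>S. c s * g s t) \<in> I3"
  by (auto simp: I3_def intro!: sum.neutral)

lemma e_in_I3: "a \<le> b \<and> b \<le> c \<Longrightarrow> I3_e a b c \<in> I3"
  by (auto simp: I3_def I3_e_def)

lemma e_nonzero: assumes "(0::'r::comm_ring_1) \<noteq> 1" shows "I3_e a b c \<noteq> (\<lambda>t. 0::'r)"
proof
  assume "I3_e a b c = (\<lambda>t. 0::'r)"
  then have "I3_e a b c (a,b,c) = (0::'r)" by simp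
  then show False using assms by (simp add: I3_e_def)
qed

lemma e_inj: assumes "(0::'r::comm_ring_1) \<noteq> 1" "I3_e a b c = (I3_e a' b' c' :: _ \<Rightarrow> 'r)" shows "a = a' \<and> b = b' \<and> c = c'"
proof -
  from assms(2) have "I3_e a b c (a,b,c) = (I3_e a' b' c' (a,b,c) :: 'r)" by simp
  then show ?thesis using assms(1) by (simp add: I3_e_def split: if_splits)
qed

lemma scal_mult: "I3_mult (\<lambda>t. r * (f::_\<Rightarrow>'r::comm_ring_1) t) (\<lambda>t. s * g t) = (\<lambda>t. (r * s) * I3_mult f g t)"
  by (auto simp: I3_mult_def sum_distrib_left intro!: ext sum.cong simp: ac_simps)

definition chains :: "('a::order \<times> 'a \<times> 'a) set" where
  "chains = {(a,b,c). a \<le> b \<and> b \<le> c}"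

definition Eb :: "'a \<times> 'a \<times> 'a \<Rightarrow> 'a \<times> 'a \<times> 'a \<Rightarrow> 'r::{zero,one}" where
  "Eb s = I3_e (fst s) (fst (snd s)) (snd (snd s))"

lemma Eb_in: "s \<in> chains \<Longrightarrow> Eb s \<in> I3"
  by (auto simp: chains_def Eb_def e_in_I3)

lemma expansion:
  fixes f :: "'a::{finite,order} \<times> 'a \<times> 'a \<Rightarrow> 'r::comm_ring_1"
  assumes "f \<in> I3"
  shows "f = (\<lambda>t. \<Sum>s\<in>chains. f s * Eb s t)"
proof
  fix t :: "'a \<times> 'a \<times> 'a"
  obtain a b c where t: "t = (a,b,c)" by (cases t) auto
  have "(\<Sum>s\<in>chains. f s * Eb s t) = (if t \<in> chains then f t * Eb t t else 0)"
    by (rule sum_single) (auto simp: Eb_def I3_e_def)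
  then show "f t = (\<Sum>s\<in>chains. f s * Eb s t)"
    using assms by (auto simp: Eb_def I3_e_def chains_def I3_def t)
qed

context
  fixes h :: "'a::{finite,order} \<times> 'a \<times> 'a \<Rightarrow> 'r::comm_ring_1"
  assumes h: "h \<in> I3"
begin
lemma ex_h_ey: "x \<noteq> y \<Longrightarrow> I3_mult (I3_e x x x) (I3_mult h (I3_e y y y)) = (\<lambda>t. 0)"
  by (rule ext, clarify, simp add: I3_mult_e_left[OF I3_mult_in] I3_mult_e_right[OF h])
     (metis order.antisym)
lemma ey_h_ex: "x \<noteq> y \<Longrightarrow> I3_mult (I3_mult (I3_e y y y) h) (I3_e x x x) = (\<lambda>t. 0)"
  by (rule ext, clarify, simp add: I3_mult_e_left[OF h] I3_mult_e_right[OF I3_mult_in])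
     (metis order.antisym)
lemma exxz_h_ey: "y \<noteq> z \<Longrightarrow> I3_mult (I3_e x x z) (I3_mult h (I3_e y y y)) = (\<lambda>t. 0)"
  by (rule ext, clarify, simp add: I3_mult_e_left[OF I3_mult_in] I3_mult_e_right[OF h])
     (metis order.antisym)
lemma ey_h_exzz: "y \<noteq> x \<Longrightarrow> I3_mult (I3_mult (I3_e y y y) h) (I3_e x z z) = (\<lambda>t. 0)"
  by (rule ext, clarify, simp add: I3_mult_e_left[OF h] I3_mult_e_right[OF I3_mult_in])
     (metis order.antisym)
end

lemma ee_same: "I3_mult (I3_e x x x) (I3_e x x x) = (I3_e x x x :: _ \<Rightarrow> 'r::comm_ring_1)"
  by (rule ext, clarify, simp add: I3_mult_e_left e_in_I3) (auto simp: I3_e_def intro: order.antisym)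
lemma ee_diff: "x \<noteq> y \<Longrightarrow> I3_mult (I3_e x x x) (I3_e y y y) = (\<lambda>t. 0 :: 'r::comm_ring_1)"
  by (rule ext, clarify, simp add: I3_mult_e_left e_in_I3) (auto simp: I3_e_def intro: order.antisym)
lemma e_a_aac: "a \<le> c \<Longrightarrow> I3_mult (I3_e a a a) (I3_e a a c) = (I3_e a a c :: _ \<Rightarrow> 'r::comm_ring_1)"
  by (rule ext, clarify, simp add: I3_mult_e_left e_in_I3) (auto simp: I3_e_def intro: order.antisym)
lemma e_aac_a: "a < c \<Longrightarrow> I3_mult (I3_e a a c) (I3_e a a a) = (\<lambda>t. 0 :: 'r::comm_ring_1)"
  by (rule ext, clarify, simp add: I3_mult_e_left e_in_I3) (auto simp: I3_e_def intro: order.antisym)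
lemma e_abb_b: "a \<le> b \<Longrightarrow> I3_mult (I3_e a b b) (I3_e b b b) = (I3_e a b b :: _ \<Rightarrow> 'r::comm_ring_1)"
  by (rule ext, clarify, simp add: I3_mult_e_left e_in_I3) (auto simp: I3_e_def intro: order.antisym)
lemma e_b_abb: "a < b \<Longrightarrow> I3_mult (I3_e b b b) (I3_e a b b) = (\<lambda>t. 0 :: 'r::comm_ring_1)"
  by (rule ext, clarify, simp add: I3_mult_e_left e_in_I3) (auto simp: I3_e_def intro: order.antisym)
lemma e_abb_bbc: "a \<le> b \<Longrightarrow> b \<le> c \<Longrightarrow> I3_mult (I3_e a b b) (I3_e b b c) = (I3_e a b c :: _ \<Rightarrow> 'r::comm_ring_1)"
  by (rule ext, clarify, simp add: I3_mult_e_left e_in_I3) (auto simp: I3_e_def intro: order.antisym)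
lemma e_xxz_xzz: "x \<le> z \<Longrightarrow> I3_mult (I3_e x x z) (I3_e x z z) =
    (\<lambda>t. \<Sum>s\<in>{s. x \<le> s \<and> s \<le> z}. 1 * (I3_e x s z t :: 'r::comm_ring_1))"
proof (rule ext, clarify)
  fix x1 x2 x3 assume xz: "x \<le> z"
  have "(\<Sum>s\<in>{s. x \<le> s \<and> s \<le> z}. 1 * (I3_e x s z (x1,x2,x3) :: 'r)) =
     (if x2 \<in> {s. x \<le> s \<and> s \<le> z} then 1 * (I3_e x x2 z (x1,x2,x3)) else 0)"
    by (rule sum_single) (auto simp: I3_e_def)
  then show "I3_mult (I3_e x x z) (I3_e x z z) (x1,x2,x3) =
    (\<Sum>s\<in>{s. x \<le> s \<and> s \<le> z}. 1 * (I3_e x s z (x1,x2,x3) :: 'r))"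
    using xz by (simp add: I3_mult_e_left e_in_I3) (auto simp: I3_e_def)
qed


locale I3iso =
  fixes \<Phi> :: "('a::{finite,order} \<times> 'a \<times> 'a \<Rightarrow> 'r::comm_ring_1)
               \<Rightarrow> ('b::{finite,order} \<times> 'b \<times> 'b \<Rightarrow> 'r)"
  assumes indec: "indecomposable_ring TYPE('r)"
    and bij: "bij_betw \<Phi> I3 I3"
    and add: "\<And>f g. f \<in> I3 \<Longrightarrow> g \<in> I3 \<Longrightarrow> \<Phi> (\<lambda>t. f t + g t) = (\<lambda>t. \<Phi> f t + \<Phi> g t)"
    and smult: "\<And>r f. f \<in> I3 \<Longrightarrow> \<Phi> (\<lambda>t. r * f t) = (\<lambda>t. r * \<Phi> f t)"
    and mult: "\<And>f g. f \<in> I3 \<Longrightarrow> g \<in> I3 \<Longrightarrow> \<Phi> (I3_mult f g) = I3_mult (\<Phi> f) (\<Phi> g)"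
begin

lemma zero_one: "(0::'r) \<noteq> 1" using indec by (simp add: indecomposable_ring_def)
lemma idem: "(v::'r) * v = v \<Longrightarrow> v = 0 \<or> v = 1" using indec by (simp add: indecomposable_ring_def)
lemma Phi_in: "f \<in> I3 \<Longrightarrow> \<Phi> f \<in> I3" using bij by (auto simp: bij_betw_def)
lemma Phi_inj: "f \<in> I3 \<Longrightarrow> g \<in> I3 \<Longrightarrow> \<Phi> f = \<Phi> g \<Longrightarrow> f = g"
  using bij by (auto simp: bij_betw_def inj_on_def)
lemma Phi_surj: "g \<in> I3 \<Longrightarrow> \<exists>f\<in>I3. \<Phi> f = g" using bij by (metis bij_betw_def imageE)
lemma Phi_0: "\<Phi> (\<lambda>t. 0) = (\<lambda>t. 0)"
  using smult[of "\<lambda>t. 0" 0] by (simp add: I3_0_in)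
lemma Phi_zero_iff: "f \<in> I3 \<Longrightarrow> \<Phi> f = (\<lambda>t. 0) \<Longrightarrow> f = (\<lambda>t. 0)"
  using Phi_inj[of f "\<lambda>t. 0"] Phi_0 I3_0_in by auto

lemma Phi_sum:
  assumes "finite S" "\<And>s. s \<in> S \<Longrightarrow> g s \<in> I3"
  shows "\<Phi> (\<lambda>t. \<Sum>s\<in>S. c s * g s t) = (\<lambda>t. \<Sum>s\<in>S. c s * \<Phi> (g s) t)"
  using assms
proof (induction S rule: finite_induct)
  case empty
  then show ?case by (simp add: Phi_0)
next
  case (insert x F)
  have "\<Phi> (\<lambda>t. \<Sum>s\<in>insert x F. c s * g s t) = \<Phi> (\<lambda>t. c x * g x t + (\<Sum>s\<in>F. c s * g s t))"
    using insert by simp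
  also have "\<dots> = (\<lambda>t. \<Phi> (\<lambda>t. c x * g x t) t + \<Phi> (\<lambda>t. \<Sum>s\<in>F. c s * g s t) t)"
    by (rule add) (use insert in \<open>auto intro: I3_smult_in I3_sum_in\<close>)
  also have "\<dots> = (\<lambda>t. c x * \<Phi> (g x) t + (\<Sum>s\<in>F. c s * \<Phi> (g s) t))"
    using insert by (simp add: smult)
  also have "\<dots> = (\<lambda>t. \<Sum>s\<in>insert x F. c s * \<Phi> (g s) t)"
    using insert by simp
  finally show ?case .
qed

lemma Phi_expand: "h \<in> I3 \<Longrightarrow> \<Phi> h = (\<lambda>t. \<Sum>s\<in>chains. h s * \<Phi> (Eb s) t)"
  by (subst expansion, assumption, rule Phi_sum) (auto intro: Eb_in)

definition eps where "eps x = \<Phi> (I3_e x x x)"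

lemma eps_in: "eps x \<in> I3" unfolding eps_def by (rule Phi_in) (simp add: e_in_I3)

lemma eps_idem: "I3_mult (eps x) (eps x) = eps x"
  unfolding eps_def by (subst mult[symmetric]) (auto simp: e_in_I3 ee_same)

lemma eps_orth: "x \<noteq> y \<Longrightarrow> I3_mult (eps x) (eps y) = (\<lambda>t. 0)"
  unfolding eps_def by (subst mult[symmetric]) (auto simp: e_in_I3 ee_diff Phi_0)

lemma eps_01: "eps x (q,q,q) = 0 \<or> eps x (q,q,q) = 1"
  by (rule idem) (metis eps_idem I3_mult_diag)

lemma eps_disj: "x \<noteq> y \<Longrightarrow> eps x (q,q,q) = 1 \<Longrightarrow> eps y (q,q,q) = 0"
  using eps_orth[of x y] I3_mult_diag[of "eps x" "eps y" q] eps_01[of y q]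
  by (metis mult_1)

lemma nd1: assumes "a < c" shows "\<Phi> (I3_e a a c) (q,q,q) = 0"
proof -
  let ?X = "\<Phi> (I3_e a a c)"
  have X: "?X = I3_mult (eps a) ?X"
    unfolding eps_def using assms by (subst mult[symmetric]) (auto simp: e_in_I3 e_a_aac)
  have Z: "I3_mult ?X (eps a) = (\<lambda>t. 0)"
    unfolding eps_def using assms by (subst mult[symmetric]) (auto simp: e_in_I3 e_aac_a Phi_0)
  have "?X (q,q,q) = eps a (q,q,q) * ?X (q,q,q)" by (subst X) (simp add: I3_mult_diag)
  moreover have "?X (q,q,q) * eps a (q,q,q) = 0" using Z I3_mult_diag by metis
  ultimately show ?thesis by (simp add: mult.commute)
qed

lemma nd2: assumes "a < b" shows "\<Phi> (I3_e a b b) (q,q,q) = 0"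
proof -
  let ?X = "\<Phi> (I3_e a b b)"
  have X: "?X = I3_mult ?X (eps b)"
    unfolding eps_def using assms by (subst mult[symmetric]) (auto simp: e_in_I3 e_abb_b)
  have Z: "I3_mult (eps b) ?X = (\<lambda>t. 0)"
    unfolding eps_def using assms by (subst mult[symmetric]) (auto simp: e_in_I3 e_b_abb Phi_0)
  have "?X (q,q,q) = ?X (q,q,q) * eps b (q,q,q)" by (subst X) (simp add: I3_mult_diag)
  moreover have "eps b (q,q,q) * ?X (q,q,q) = 0" using Z I3_mult_diag by metis
  ultimately show ?thesis by (simp add: mult.commute)
qed

lemma nd3: assumes "a < b" "b < c" shows "\<Phi> (I3_e a b c) (q,q,q) = 0"
proof -
  have "\<Phi> (I3_e a b c) = I3_mult (\<Phi> (I3_e a b b)) (\<Phi> (I3_e b b c))"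
    using assms by (subst mult[symmetric]) (auto simp: e_in_I3 e_abb_bbc)
  then show ?thesis by (simp add: I3_mult_diag nd2[OF assms(1)])
qed

lemma nondiag: "s \<in> chains \<Longrightarrow> (\<And>y. s \<noteq> (y,y,y)) \<Longrightarrow> \<Phi> (Eb s) (q,q,q) = 0"
  by (cases s) (auto simp: chains_def Eb_def order.order_iff_strict nd1 nd2 nd3)

lemma Phi_diag_eval:
  assumes x: "eps x (q,q,q) = 1" and h: "h \<in> I3"
  shows "\<Phi> h (q,q,q) = h (x,x,x)"
proof -
  have "\<Phi> h (q,q,q) = (\<Sum>s\<in>chains. h s * \<Phi> (Eb s) (q,q,q))"
    by (subst Phi_expand[OF h]) simp
  also have "\<dots> = (if (x,x,x) \<in> chains then h (x,x,x) * \<Phi> (Eb (x,x,x)) (q,q,q) else 0)"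
  proof (rule sum_single)
    fix s :: "'a \<times> 'a \<times> 'a" assume s: "s \<in> chains" "s \<noteq> (x,x,x)"
    show "h s * \<Phi> (Eb s) (q,q,q) = 0"
    proof (cases "\<exists>y. s = (y,y,y)")
      case True
      then obtain y where y: "s = (y,y,y)" by blast
      with s have "y \<noteq> x" by auto
      then have "eps y (q,q,q) = 0" using eps_disj x by metis
      then show ?thesis by (simp add: y Eb_def eps_def)
    next
      case False
      then show ?thesis using nondiag[OF s(1)] by auto
    qed
  qed simp
  also have "\<dots> = h (x,x,x)" using x by (simp add: chains_def Eb_def eps_def)
  finally show ?thesis .
qed

lemma Phi_diag_none:
  assumes x: "\<And>x. eps x (q,q,q) \<noteq> 1" and h: "h \<in> I3"
  shows "\<Phi> h (q,q,q) = 0"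
proof -
  have "\<Phi> h (q,q,q) = (\<Sum>s\<in>chains. h s * \<Phi> (Eb s) (q,q,q))"
    by (subst Phi_expand[OF h]) simp
  also have "\<dots> = 0"
  proof (rule sum.neutral, rule ballI)
    fix s :: "'a \<times> 'a \<times> 'a" assume s: "s \<in> chains"
    show "h s * \<Phi> (Eb s) (q,q,q) = 0"
    proof (cases "\<exists>y. s = (y,y,y)")
      case True
      then obtain y where y: "s = (y,y,y)" by blast
      have "eps y (q,q,q) = 0" using eps_01 x by metis
      then show ?thesis by (simp add: y Eb_def eps_def)
    next
      case False
      then show ?thesis using nondiag[OF s(1)] by auto
    qed
  qed
  finally show ?thesis .
qed

lemma cover: "\<exists>x. eps x (q,q,q) = 1"
proof (rule ccontr)
  assume "\<nexists>x. eps x (q,q,q) = 1"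
  then have n: "\<And>x. eps x (q,q,q) \<noteq> 1" by blast
  obtain h where h: "h \<in> I3" "\<Phi> h = I3_e q q q" using Phi_surj[of "I3_e q q q"] by (auto simp: e_in_I3)
  have "\<Phi> h (q,q,q) = 0" by (rule Phi_diag_none[OF n h(1)])
  then show False using h(2) zero_one by (simp add: I3_e_def)
qed

lemma uniq_pt: assumes "eps x (q1,q1,q1) = 1" "eps x (q2,q2,q2) = 1" shows "q1 = q2"
proof (rule ccontr)
  assume ne: "q1 \<noteq> q2"
  obtain h where h: "h \<in> I3" "\<Phi> h = I3_e q1 q1 q1" using Phi_surj[of "I3_e q1 q1 q1"] by (auto simp: e_in_I3)
  have "\<Phi> h (q1,q1,q1) = h (x,x,x)" by (rule Phi_diag_eval[OF assms(1) h(1)])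
  moreover have "\<Phi> h (q2,q2,q2) = h (x,x,x)" by (rule Phi_diag_eval[OF assms(2) h(1)])
  ultimately show False using h(2) ne zero_one by (simp add: I3_e_def)
qed

lemma Fa: assumes "x \<noteq> y" "eps y (q,q,q) = 1" shows "eps x (a,b,q) = 0"
proof (cases "b \<le> q")
  case True
  obtain g where g: "g \<in> I3" "\<Phi> g = I3_e b q q" using Phi_surj[of "I3_e b q q"] True by (auto simp: e_in_I3)
  have "I3_mult (eps x) (I3_mult (I3_e b q q) (eps y)) = \<Phi> (I3_mult (I3_e x x x) (I3_mult g (I3_e y y y)))"
    using g by (simp add: mult e_in_I3 I3_mult_in eps_def)
  also have "\<dots> = (\<lambda>t. 0)" using assms(1) by (simp add: ex_h_ey[OF g(1)] Phi_0)
  finally have "I3_mult (eps x) (I3_mult (I3_e b q q) (eps y)) (a,q,q) = 0" by simp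
  then show ?thesis using assms(2) by (simp add: I3_mult_F1 eps_in)
next
  case False
  then show ?thesis using I3_zero[OF eps_in] by blast
qed

lemma Fb: assumes "x \<noteq> y" "eps y (p,p,p) = 1" shows "eps x (p,b,c) = 0"
proof (cases "p \<le> b")
  case True
  obtain g where g: "g \<in> I3" "\<Phi> g = I3_e p p b" using Phi_surj[of "I3_e p p b"] True by (auto simp: e_in_I3)
  have "I3_mult (I3_mult (eps y) (I3_e p p b)) (eps x) = \<Phi> (I3_mult (I3_mult (I3_e y y y) g) (I3_e x x x))"
    using g by (simp add: mult e_in_I3 I3_mult_in eps_def)
  also have "\<dots> = (\<lambda>t. 0)" using assms(1) by (simp add: ey_h_ex[OF g(1)] Phi_0)
  finally have "I3_mult (I3_mult (eps y) (I3_e p p b)) (eps x) (p,p,c) = 0" by simp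
  then show ?thesis using assms(2) by (simp add: I3_mult_F2 eps_in)
next
  case False
  then show ?thesis using I3_zero[OF eps_in] by blast
qed

lemma exists_pt: "\<exists>q. eps x (q,q,q) = 1"
proof (rule ccontr)
  assume "\<nexists>q. eps x (q,q,q) = 1"
  then have n: "\<And>q. eps x (q,q,q) \<noteq> 1" by blast
  have "eps x = (\<lambda>t. 0)"
  proof
    fix t :: "'b \<times> 'b \<times> 'b" obtain a b c where t: "t = (a,b,c)" by (cases t) auto
    obtain y where y: "eps y (c,c,c) = 1" using cover by blast
    with n have "x \<noteq> y" by metis
    then show "eps x t = 0" using Fa y t by blast
  qed
  then have "I3_e x x x = (\<lambda>t. 0::'r)" unfolding eps_def using Phi_zero_iff[of "I3_e x x x"] e_in_I3[of x x x] by simp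
  then show False using e_nonzero zero_one by metis
qed

definition phi where "phi x = (THE q. eps x (q,q,q) = 1)"

lemma phi: "eps x (phi x, phi x, phi x) = 1"
  unfolding phi_def by (rule theI') (use exists_pt uniq_pt in blast)

lemma phi_unique: "eps x (q,q,q) = 1 \<longleftrightarrow> q = phi x"
  using phi uniq_pt by blast

lemma eps_eq: "eps x = I3_e (phi x) (phi x) (phi x)"
proof
  fix t :: "'b \<times> 'b \<times> 'b" obtain a b c where t: "t = (a,b,c)" by (cases t) auto
  show "eps x t = I3_e (phi x) (phi x) (phi x) t"
  proof (cases "t = (phi x, phi x, phi x)")
    case True
    then show ?thesis using phi by (simp add: I3_e_def)
  next
    case False
    obtain y where y: "eps y (c,c,c) = 1" using cover by blast
    obtain y' where y': "eps y' (a,a,a) = 1" using cover by blast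
    have "eps x (a,b,c) = 0"
    proof (cases "y = x \<and> y' = x")
      case True
      then have "c = phi x" "a = phi x" using y y' phi_unique by auto
      then show ?thesis using False t I3_zero[OF eps_in, of a b c] order.antisym by blast
    next
      case False
      then show ?thesis using Fa[OF _ y] Fb[OF _ y'] by metis
    qed
    then show ?thesis using False t by (simp add: I3_e_def)
  qed
qed

lemma Phi_e_diag: "\<Phi> (I3_e x x x) = I3_e (phi x) (phi x) (phi x)"
  using eps_eq by (simp add: eps_def)

lemma phi_inj: "inj phi"
proof (rule injI)
  fix x y assume "phi x = phi y"
  then have "\<Phi> (I3_e x x x) = \<Phi> (I3_e y y y)" by (simp add: Phi_e_diag)
  then have "I3_e x x x = (I3_e y y y :: _ \<Rightarrow> 'r)" by (rule Phi_inj[rotated 2]) (auto simp: e_in_I3)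
  then show "x = y" using e_inj zero_one by metis
qed

lemma phi_surj: "surj phi"
  using cover phi_unique by (metis surjI)

lemma phi_bij: "bij phi" using phi_inj phi_surj by (rule bijI)


lemma X_form:
  assumes xz: "x < z"
  shows "\<Phi> (I3_e x x z) = (\<lambda>t. \<Phi> (I3_e x x z) (phi x, phi x, phi z) * I3_e (phi x) (phi x) (phi z) t)"
proof -
  let ?X = "\<Phi> (I3_e x x z)" and ?u = "phi x" and ?w = "phi z"
  have XI: "?X \<in> I3" using xz by (auto intro!: Phi_in e_in_I3)
  have X: "?X = I3_mult (I3_e ?u ?u ?u) ?X"
    using xz by (simp add: mult[symmetric] e_in_I3 e_a_aac Phi_e_diag[symmetric])
  have supp: "?X (a,b,c) = 0" if "\<not> (a = ?u \<and> b = ?u)" for a b c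
    using that by (subst X) (auto simp: I3_mult_e_left[OF XI] intro: order.antisym)
  have zc: "?X (?u,?u,c) = 0" if "c \<noteq> ?w" for c
  proof (cases "?u \<le> c")
    case True
    obtain g where g: "g \<in> I3" "\<Phi> g = I3_e ?u c c" using Phi_surj[of "I3_e ?u c c"] True by (auto simp: e_in_I3)
    obtain y where y: "phi y = c" using phi_surj by (metis surjD)
    with that have yz: "y \<noteq> z" by auto
    have "I3_mult ?X (I3_e ?u c c) = I3_mult ?X (I3_mult (I3_e ?u c c) (I3_e c c c))"
      using True by (simp add: e_abb_b)
    also have "\<dots> = \<Phi> (I3_mult (I3_e x x z) (I3_mult g (I3_e y y y)))"
      using g xz y by (simp add: mult e_in_I3 I3_mult_in Phi_e_diag)
    also have "\<dots> = (\<lambda>t. 0)" using yz by (simp add: exxz_h_ey[OF g(1)] Phi_0)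
    finally have "I3_mult ?X (I3_e ?u c c) (?u,c,c) = 0" by simp
    then show ?thesis using True by (simp add: I3_mult_e_right[OF XI])
  next
    case False
    then show ?thesis using I3_zero[OF XI] by blast
  qed
  show ?thesis
  proof
    fix t :: "'b \<times> 'b \<times> 'b" obtain a b c where t: "t = (a,b,c)" by (cases t) auto
    show "?X t = ?X (?u, ?u, ?w) * I3_e ?u ?u ?w t"
      using supp[where a=a and b=b and c=c] zc[of c] by (cases "a = ?u \<and> b = ?u \<and> c = ?w") (auto simp: t I3_e_def)
  qed
qed

lemma Y_form:
  assumes xz: "x < z"
  shows "\<Phi> (I3_e x z z) = (\<lambda>t. \<Phi> (I3_e x z z) (phi x, phi z, phi z) * I3_e (phi x) (phi z) (phi z) t)"
proof -
  let ?Y = "\<Phi> (I3_e x z z)" and ?u = "phi x" and ?w = "phi z"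
  have YI: "?Y \<in> I3" using xz by (auto intro!: Phi_in e_in_I3)
  have Y: "?Y = I3_mult ?Y (I3_e ?w ?w ?w)"
    using xz by (simp add: mult[symmetric] e_in_I3 e_abb_b Phi_e_diag[symmetric])
  have supp: "?Y (a,b,c) = 0" if "\<not> (b = ?w \<and> c = ?w)" for a b c
    using that by (subst Y) (auto simp: I3_mult_e_right[OF YI] intro: order.antisym)
  have za: "?Y (a,?w,?w) = 0" if "a \<noteq> ?u" for a
  proof (cases "a \<le> ?w")
    case True
    obtain g where g: "g \<in> I3" "\<Phi> g = I3_e a a ?w" using Phi_surj[of "I3_e a a ?w"] True by (auto simp: e_in_I3)
    obtain y where y: "phi y = a" using phi_surj by (metis surjD)
    with that have yx: "y \<noteq> x" by auto
    have "I3_mult (I3_e a a ?w) ?Y = I3_mult (I3_mult (I3_e a a a) (I3_e a a ?w)) ?Y"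
      using True by (simp add: e_a_aac)
    also have "\<dots> = \<Phi> (I3_mult (I3_mult (I3_e y y y) g) (I3_e x z z))"
      using g xz y by (simp add: mult e_in_I3 I3_mult_in Phi_e_diag)
    also have "\<dots> = (\<lambda>t. 0)" using yx by (simp add: ey_h_exzz[OF g(1)] Phi_0)
    finally have "I3_mult (I3_e a a ?w) ?Y (a,a,?w) = 0" by simp
    then show ?thesis using True by (simp add: I3_mult_e_left[OF YI])
  next
    case False
    then show ?thesis using I3_zero[OF YI] by blast
  qed
  show ?thesis
  proof
    fix t :: "'b \<times> 'b \<times> 'b" obtain a b c where t: "t = (a,b,c)" by (cases t) auto
    show "?Y t = ?Y (?u, ?w, ?w) * I3_e ?u ?w ?w t"
      using supp[where a=a and b=b and c=c] za[of a] by (cases "a = ?u \<and> b = ?w \<and> c = ?w") (auto simp: t I3_e_def)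
  qed
qed

lemma phi_less: assumes "x < z" shows "phi x < phi z"
proof -
  let ?L = "\<Phi> (I3_e x x z) (phi x, phi x, phi z)"
  have "?L \<noteq> 0"
  proof
    assume "?L = 0"
    then have "\<Phi> (I3_e x x z) = (\<lambda>t. 0)" using X_form[OF assms] by simp
    moreover have "I3_e x x z \<in> (I3 :: (_ \<Rightarrow> 'r) set)" by (rule e_in_I3) (use assms in auto)
    ultimately have "I3_e x x z = (\<lambda>t. 0::'r)" using Phi_zero_iff by blast
    then show False using e_nonzero zero_one by metis
  qed
  moreover have "\<Phi> (I3_e x x z) \<in> I3" by (rule Phi_in, rule e_in_I3) (use assms in auto)
  ultimately have "phi x \<le> phi z" using I3_zero[of "\<Phi> (I3_e x x z)" "phi x" "phi x" "phi z"] by auto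
  moreover have "phi x \<noteq> phi z" using phi_inj assms by (auto dest: injD)
  ultimately show ?thesis by simp
qed

lemma mid_zero:
  assumes "x < s" "s < z" "b \<noteq> phi s"
  shows "\<Phi> (I3_e x s z) (a,b,c) = 0"
proof -
  have "\<Phi> (I3_e x s z) = I3_mult (\<Phi> (I3_e x s s)) (\<Phi> (I3_e s s z))"
    using assms by (simp add: mult[symmetric] e_in_I3 e_abb_bbc)
  also have "\<dots> = (\<lambda>t. (\<Phi> (I3_e x s s) (phi x, phi s, phi s) * \<Phi> (I3_e s s z) (phi s, phi s, phi z))
        * I3_mult (I3_e (phi x) (phi s) (phi s)) (I3_e (phi s) (phi s) (phi z)) t)"
    by (subst Y_form[OF assms(1)], subst X_form[OF assms(2)]) (rule scal_mult)
  also have "\<dots> = (\<lambda>t. (\<Phi> (I3_e x s s) (phi x, phi s, phi s) * \<Phi> (I3_e s s z) (phi s, phi s, phi z))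
        * I3_e (phi x) (phi s) (phi z) t)"
    using phi_less assms by (simp add: e_abb_bbc less_imp_le)
  finally show ?thesis using assms(3) by (simp add: I3_e_def)
qed

lemma lam_one:
  assumes xz: "x < z"
  shows "\<Phi> (I3_e x x z) (phi x, phi x, phi z) = 1 \<and> \<Phi> (I3_e x z z) (phi x, phi z, phi z) = 1"
proof -
  let ?L = "\<Phi> (I3_e x x z) (phi x, phi x, phi z)" and ?R = "\<Phi> (I3_e x z z) (phi x, phi z, phi z)"
  let ?u = "phi x" and ?w = "phi z"
  have uw: "?u < ?w" by (rule phi_less[OF xz])
  let ?S = "{s. x \<le> s \<and> s \<le> z}"
  have "I3_mult (\<Phi> (I3_e x x z)) (\<Phi> (I3_e x z z)) = \<Phi> (\<lambda>t. \<Sum>s\<in>?S. 1 * I3_e x s z t)"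
    using xz by (simp add: mult[symmetric] e_in_I3 e_xxz_xzz)
  also have "\<dots> = (\<lambda>t. \<Sum>s\<in>?S. 1 * \<Phi> (I3_e x s z) t)"
    by (rule Phi_sum) (auto intro: e_in_I3)
  finally have eq1: "I3_mult (\<Phi> (I3_e x x z)) (\<Phi> (I3_e x z z)) = (\<lambda>t. \<Sum>s\<in>?S. 1 * \<Phi> (I3_e x s z) t)" .
  have "I3_mult (\<Phi> (I3_e x x z)) (\<Phi> (I3_e x z z)) =
      (\<lambda>t. (?L * ?R) * I3_mult (I3_e ?u ?u ?w) (I3_e ?u ?w ?w) t)"
    by (subst X_form[OF xz], subst Y_form[OF xz]) (rule scal_mult)
  also have "\<dots> = (\<lambda>t. (?L * ?R) * (\<Sum>s\<in>{s. ?u \<le> s \<and> s \<le> ?w}. 1 * I3_e ?u s ?w t))"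
    using uw by (simp add: e_xxz_xzz)
  finally have eq2: "I3_mult (\<Phi> (I3_e x x z)) (\<Phi> (I3_e x z z)) =
      (\<lambda>t. (?L * ?R) * (\<Sum>s\<in>{s. ?u \<le> s \<and> s \<le> ?w}. 1 * I3_e ?u s ?w t))" .
  have a1: "(\<Sum>s\<in>{s. ?u \<le> s \<and> s \<le> ?w}. 1 * I3_e ?u s ?w (?u,?u,?w)) = (1::'r)"
    by (subst sum_single[where a="?u"]) (use uw in \<open>auto simp: I3_e_def\<close>)
  have a2: "(\<Sum>s\<in>{s. ?u \<le> s \<and> s \<le> ?w}. 1 * I3_e ?u s ?w (?u,?w,?w)) = (1::'r)"
    by (subst sum_single[where a="?w"]) (use uw in \<open>auto simp: I3_e_def\<close>)
  have b1: "(\<Sum>s\<in>?S. 1 * \<Phi> (I3_e x s z) (?u,?u,?w)) = ?L"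
  proof (subst sum_single[where a=x])
    fix s assume s: "s \<in> ?S" "s \<noteq> x"
    show "1 * \<Phi> (I3_e x s z) (?u,?u,?w) = 0"
    proof (cases "s = z")
      case True
      have "\<Phi> (I3_e x z z) (?u,?u,?w) = 0" by (subst Y_form[OF xz]) (use uw in \<open>auto simp: I3_e_def\<close>)
      with True show ?thesis by simp
    next
      case False
      then have "x < s" "s < z" using s by auto
      moreover then have "?u \<noteq> phi s" using phi_inj by (auto dest: injD)
      ultimately show ?thesis using mid_zero by simp
    qed
  qed (use xz in auto)
  have b2: "(\<Sum>s\<in>?S. 1 * \<Phi> (I3_e x s z) (?u,?w,?w)) = ?R"
  proof (subst sum_single[where a=z])
    fix s assume s: "s \<in> ?S" "s \<noteq> z"
    show "1 * \<Phi> (I3_e x s z) (?u,?w,?w) = 0"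
    proof (cases "s = x")
      case True
      have "\<Phi> (I3_e x x z) (?u,?w,?w) = 0" by (subst X_form[OF xz]) (use uw in \<open>auto simp: I3_e_def\<close>)
      with True show ?thesis by simp
    next
      case False
      then have "x < s" "s < z" using s by auto
      moreover then have "?w \<noteq> phi s" using phi_inj by (auto dest: injD)
      ultimately show ?thesis using mid_zero by simp
    qed
  qed (use xz in auto)
  have c1: "?L * ?R = ?L" using fun_cong[OF trans[OF eq2[symmetric] eq1], of "(?u,?u,?w)"] a1 b1 by simp
  have c2: "?L * ?R = ?R" using fun_cong[OF trans[OF eq2[symmetric] eq1], of "(?u,?w,?w)"] a2 b2 by simp
  have LR: "?L = ?R" using c1 c2 by simp
  have "?L \<noteq> 0"
  proof
    assume "?L = 0"
    then have "\<Phi> (I3_e x x z) = (\<lambda>t. 0)" using X_form[OF xz] by simp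
    moreover have "I3_e x x z \<in> (I3 :: (_ \<Rightarrow> 'r) set)" by (rule e_in_I3) (use xz in auto)
    ultimately have "I3_e x x z = (\<lambda>t. 0::'r)" using Phi_zero_iff by blast
    then show False using e_nonzero zero_one by metis
  qed
  moreover have "?L * ?L = ?L" using c1 LR by simp
  ultimately have "?L = 1" using idem by blast
  then show ?thesis using LR by simp
qed

lemma Phi_e:
  assumes "x \<le> y" "y \<le> z"
  shows "\<Phi> (I3_e x y z) = I3_e (phi x) (phi y) (phi z)"
proof -
  consider "x = y" "y = z" | "x = y" "y < z" | "x < y" "y = z" | "x < y" "y < z"
    using assms by (auto simp: order.order_iff_strict)
  then show ?thesis
  proof cases
    case 1 then show ?thesis by (simp add: Phi_e_diag)
  next
    case 2 then show ?thesis using X_form[of x z] lam_one[of x z] by simp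
  next
    case 3 then show ?thesis using Y_form[of x z] lam_one[of x z] by simp
  next
    case 4
    have "\<Phi> (I3_e x y z) = I3_mult (\<Phi> (I3_e x y y)) (\<Phi> (I3_e y y z))"
      using 4 by (simp add: mult[symmetric] e_in_I3 e_abb_bbc)
    also have "\<dots> = I3_mult (I3_e (phi x) (phi y) (phi y)) (I3_e (phi y) (phi y) (phi z))"
      using Y_form[of x y] lam_one[of x y] X_form[of y z] lam_one[of y z] 4 by simp
    also have "\<dots> = I3_e (phi x) (phi y) (phi z)"
      using 4 phi_less by (simp add: e_abb_bbc less_imp_le)
    finally show ?thesis .
  qed
qed

lemma phi_mono: "x \<le> z \<Longrightarrow> phi x \<le> phi z"
  using phi_less by (cases "x = z") (auto simp: order.order_iff_strict)

end

lemma I3iso_inv: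
  fixes \<Phi> :: "('a::{finite,order} \<times> 'a \<times> 'a \<Rightarrow> 'r::comm_ring_1)
               \<Rightarrow> ('b::{finite,order} \<times> 'b \<times> 'b \<Rightarrow> 'r)"
  assumes "I3iso \<Phi>"
  shows "I3iso (inv_into I3 \<Phi>)"
proof -
  interpret I3iso \<Phi> by fact
  let ?\<Psi> = "inv_into I3 \<Phi>"
  have inj: "inj_on \<Phi> I3" and img: "\<Phi> ` I3 = I3" using bij by (auto simp: bij_betw_def)
  have psi_in: "f \<in> I3 \<Longrightarrow> ?\<Psi> f \<in> I3" for f using img by (metis inv_into_into)
  have phipsi: "f \<in> I3 \<Longrightarrow> \<Phi> (?\<Psi> f) = f" for f using img by (metis f_inv_into_f)
  have psiphi: "f \<in> I3 \<Longrightarrow> ?\<Psi> (\<Phi> f) = f" for f using inj by (rule inv_into_f_f)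
  show ?thesis
  proof (unfold_locales, rule indec, rule bij_betw_inv_into[OF bij])
    fix f g :: "'b \<times> 'b \<times> 'b \<Rightarrow> 'r" assume f: "f \<in> I3" and g: "g \<in> I3"
    have "?\<Psi> (\<lambda>t. f t + g t) = ?\<Psi> (\<lambda>t. \<Phi> (?\<Psi> f) t + \<Phi> (?\<Psi> g) t)" using f g phipsi by simp
    also have "\<dots> = ?\<Psi> (\<Phi> (\<lambda>t. ?\<Psi> f t + ?\<Psi> g t))" using f g psi_in add by simp
    also have "\<dots> = (\<lambda>t. ?\<Psi> f t + ?\<Psi> g t)" using f g psi_in by (simp add: psiphi I3_add_in)
    finally show "?\<Psi> (\<lambda>t. f t + g t) = (\<lambda>t. ?\<Psi> f t + ?\<Psi> g t)" .
    have "?\<Psi> (I3_mult f g) = ?\<Psi> (I3_mult (\<Phi> (?\<Psi> f)) (\<Phi> (?\<Psi> g)))" using f g phipsi by simp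
    also have "\<dots> = ?\<Psi> (\<Phi> (I3_mult (?\<Psi> f) (?\<Psi> g)))" using f g psi_in mult by simp
    also have "\<dots> = I3_mult (?\<Psi> f) (?\<Psi> g)" by (simp add: psiphi I3_mult_in)
    finally show "?\<Psi> (I3_mult f g) = I3_mult (?\<Psi> f) (?\<Psi> g)" .
  next
    fix r and f :: "'b \<times> 'b \<times> 'b \<Rightarrow> 'r" assume f: "f \<in> I3"
    have "?\<Psi> (\<lambda>t. r * f t) = ?\<Psi> (\<lambda>t. r * \<Phi> (?\<Psi> f) t)" using f phipsi by simp
    also have "\<dots> = ?\<Psi> (\<Phi> (\<lambda>t. r * ?\<Psi> f t))" using f psi_in smult by simp
    also have "\<dots> = (\<lambda>t. r * ?\<Psi> f t)" using f psi_in by (simp add: psiphi I3_smult_in)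
    finally show "?\<Psi> (\<lambda>t. r * f t) = (\<lambda>t. r * ?\<Psi> f t)" .
  qed
qed

theorem theorem3p19:
  fixes \<Phi> :: "('a::{finite,order} \<times> 'a \<times> 'a \<Rightarrow> 'r::comm_ring_1)
               \<Rightarrow> ('b::{finite,order} \<times> 'b \<times> 'b \<Rightarrow> 'r)"
  assumes indec: "indecomposable_ring TYPE('r)"
    and bij: "bij_betw \<Phi> I3 I3"
    and add: "\<And>f g. f \<in> I3 \<Longrightarrow> g \<in> I3 \<Longrightarrow> \<Phi> (\<lambda>t. f t + g t) = (\<lambda>t. \<Phi> f t + \<Phi> g t)"
    and smult: "\<And>r f. f \<in> I3 \<Longrightarrow> \<Phi> (\<lambda>t. r * f t) = (\<lambda>t. r * \<Phi> f t)"
    and mult: "\<And>f g. f \<in> I3 \<Longrightarrow> g \<in> I3 \<Longrightarrow> \<Phi> (I3_mult f g) = I3_mult (\<Phi> f) (\<Phi> g)"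
  shows "\<exists>\<phi> :: 'a \<Rightarrow> 'b. poset_iso \<phi> \<and>
           (\<forall>x y z. x \<le> y \<and> y \<le> z \<longrightarrow> \<Phi> (I3_e x y z) = I3_e (\<phi> x) (\<phi> y) (\<phi> z))"
proof -
  have isoA: "I3iso \<Phi>" using assms by (simp add: I3iso_def)
  interpret A: I3iso \<Phi> by (rule isoA)
  interpret B: I3iso "inv_into I3 \<Phi>" by (rule I3iso_inv[OF isoA])
  have inj: "inj_on \<Phi> I3" using bij by (auto simp: bij_betw_def)
  have backeq: "B.phi (A.phi x) = x" for x
  proof -
    have "inv_into I3 \<Phi> (I3_e (A.phi x) (A.phi x) (A.phi x)) = inv_into I3 \<Phi> (\<Phi> (I3_e x x x))"
      by (simp add: A.Phi_e_diag)
    also have "\<dots> = I3_e x x x" by (rule inv_into_f_f[OF inj]) (simp add: e_in_I3)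
    finally have "I3_e (B.phi (A.phi x)) (B.phi (A.phi x)) (B.phi (A.phi x)) = (I3_e x x x :: _ \<Rightarrow> 'r)"
      by (simp add: B.Phi_e_diag)
    then show ?thesis using e_inj A.zero_one by metis
  qed
  have "poset_iso A.phi"
    unfolding poset_iso_def
  proof (intro conjI allI iffI)
    show "bij A.phi" by (rule A.phi_bij)
  next
    fix x y :: 'a assume "x \<le> y" then show "A.phi x \<le> A.phi y" by (rule A.phi_mono)
  next
    fix x y :: 'a assume "A.phi x \<le> A.phi y"
    then have "B.phi (A.phi x) \<le> B.phi (A.phi y)" by (rule B.phi_mono)
    then show "x \<le> y" by (simp add: backeq)
  qed
  moreover have "\<forall>x y z. x \<le> y \<and> y \<le> z \<longrightarrow> \<Phi> (I3_e x y z) = I3_e (A.phi x) (A.phi y) (A.phi z)"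
    using A.Phi_e by blast
  ultimately show ?thesis by blast
qed

end
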